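(* For every positive integer $n$, $$\Psi_n(0)=\begin{cases}0&\text{if } n=2;\\ p&\text{if } n=2p^\alpha \text{ for some prime } p \text{ and some positive integer } \alpha;\\ 1&\text{otherwise}.\end{cases}$$
   Context: The Fibonacci polynomials are defined by $F_1(x)=1$, $F_2(x)=x$, and $F_n(x)=xF_{n-1}(x)+F_{n-2}(x)$ for $n\geq 3$. For $n\geq 2$, the $n$-th fibotomic polynomial $\Psi_n(x)\in\mathbb{Z}[x]$ is the product of the monic irreducible factors of $F_n(x)$ which are not factors of $F_k(x)$ for any $k<n$; also $\Psi_1(x)=1$. Thus $F_n(x)=\prod_{d\mid n}\Psi_d(x)$ for all $n\geq1$. *)

theory Defs
  imports "HOL-Computational_Algebra.Polynomial" "HOL-Computational_Algebra.Primes"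
begin

fun fibpoly :: "nat \<Rightarrow> int poly" where
  "fibpoly 0 = 0"
| "fibpoly (Suc 0) = 1"
| "fibpoly (Suc (Suc n)) = [:0, 1:] * fibpoly (Suc n) + fibpoly n"

definition fibotomic :: "nat \<Rightarrow> int poly" where
  "fibotomic n = (\<Prod>p \<in> {p. lead_coeff p = 1 \<and> irreducible p \<and> p dvd fibpoly n \<and>
                              (\<forall>k. 1 \<le> k \<and> k < n \<longrightarrow> \<not> p dvd fibpoly k)}. p)"

end

theory Submission
  imports Defs "HOL-Computational_Algebra.Squarefree" "HOL-Computational_Algebra.Polynomial_Factorial" "HOL-Computational_Algebra.Primes"
begin

abbreviation F where "F \<equiv> fibpoly"
definition XX :: "int poly" where "XX = [:0,1:]"

lemma F_rec: "F (Suc (Suc n)) = XX * F (Suc n) + F n" by (simp add: XX_def)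
declare fibpoly.simps(3)[simp del]

lemma F_monic: "lead_coeff (F (Suc n)) = 1 \<and> degree (F (Suc n)) = n"
proof (induction n rule: less_induct)
  case (less n)
  show ?case
  proof (cases n)
    case 0 then show ?thesis by simp
  next
    case (Suc m)
    have h: "XX * F (Suc m) = pCons 0 (F (Suc m))" by (simp add: XX_def)
    have nz: "F (Suc m) \<noteq> 0" using less[of m] Suc by auto
    have d1: "degree (XX * F (Suc m)) = Suc m" using less[of m] Suc nz by (simp add: h)
    have d2: "degree (F m) < Suc m"
    proof (cases m)
      case 0 then show ?thesis by simp
    next
      case (Suc k) then show ?thesis using less[of k] \<open>n = _\<close> by simp
    qed
    have "F (Suc n) = XX * F (Suc m) + F m" using Suc by (simp add: F_rec)
    moreover have "degree (XX * F (Suc m) + F m) = Suc m"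
      using d1 d2 by (simp add: degree_add_eq_left)
    moreover have "lead_coeff (XX * F (Suc m) + F m) = lead_coeff (XX * F (Suc m))"
      using lead_coeff_add_le[of "F m" "XX * F (Suc m)"] d1 d2 by (simp add: add.commute)
    moreover have "lead_coeff (XX * F (Suc m)) = 1"
    proof -
      have "lead_coeff (F (Suc m)) = 1" using less[of m] Suc by blast
      then show ?thesis using nz by (simp add: lead_coeff_mult XX_def del: fibpoly.simps)
    qed
    ultimately show ?thesis using Suc by simp
  qed
qed

lemma F_nz: "n > 0 \<Longrightarrow> F n \<noteq> 0"
  using F_monic[of "n - 1"] by (cases n) auto

lemma cassini: "F (Suc n)^2 - XX * F (Suc n) * F n - F n ^2 = (-1)^n"
proof (induction n)
  case 0 then show ?case by simp
next
  case (Suc n)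
  have "F (Suc (Suc n))^2 - XX * F (Suc (Suc n)) * F (Suc n) - F (Suc n) ^2
     = - (F (Suc n)^2 - XX * F (Suc n) * F n - F n ^2)"
    by (simp only: F_rec) (simp add: algebra_simps power2_eq_square)
  then show ?case using Suc by simp
qed

lemma prime_not_unit_poly: "prime (q::int poly) \<Longrightarrow> q dvd (-1)^n \<Longrightarrow> False"
proof -
  assume "prime q" "q dvd (-1)^n"
  moreover have "is_unit ((-1::int poly)^n)" by (simp add: is_unit_power_iff)
  ultimately show False using dvd_unit_imp_unit not_prime_unit by blast
qed

lemma coprime_consec: "prime (q::int poly) \<Longrightarrow> q dvd F n \<Longrightarrow> q dvd F (Suc n) \<Longrightarrow> False"
proof -
  assume q: "prime q" "q dvd F n" "q dvd F (Suc n)"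
  have "q dvd F (Suc n)^2 - XX * F (Suc n) * F n - F n ^2"
    using q by (intro dvd_diff) (auto simp: power2_eq_square)
  then show False using cassini[of n] prime_not_unit_poly[OF q(1)] by metis
qed

lemma F_add: "F (m + n + 1) = F (m + 1) * F (n + 1) + F m * F n"
proof (induction m rule: less_induct)
  case (less m)
  show ?case
  proof (cases m)
    case 0 then show ?thesis by simp
  next
    case (Suc k)
    show ?thesis
    proof (cases k)
      case 0 then show ?thesis using Suc by (simp add: algebra_simps F_rec)
    next
      case (Suc j)
      have "F (m + n + 1) = XX * F (k + n + 1) + F (j + n + 1)"
        using \<open>m = Suc k\<close> Suc by (simp add: F_rec[symmetric])
      also have "\<dots> = XX * (F (k + 1) * F (n + 1) + F k * F n) + (F (j + 1) * F (n + 1) + F j * F n)"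
        using less[of k] less[of j] \<open>m = Suc k\<close> Suc by simp
      also have "\<dots> = (XX * F (k+1) + F (j+1)) * F (n+1) + (XX * F k + F j) * F n"
        by (simp add: algebra_simps)
      also have "\<dots> = F (m + 1) * F (n + 1) + F m * F n"
        using \<open>m = Suc k\<close> Suc by (simp add: F_rec)
      finally show ?thesis .
    qed
  qed
qed


lemma shift: assumes q: "prime q" "q dvd F r" "r \<ge> 1"
  shows "q dvd F (m + r) \<longleftrightarrow> q dvd F m"
proof -
  have e: "F (m + r) = F (m + 1) * F r + F m * F (r - 1)"
    using F_add[of m "r - 1"] q(3) by simp
  have nd: "\<not> q dvd F (r - 1)"
  proof
    assume "q dvd F (r - 1)"
    moreover have "Suc (r - 1) = r" using q(3) by simp
    ultimately show False using coprime_consec[OF q(1), of "r - 1"] q by simp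
  qed
  have "q dvd F (m + r) \<longleftrightarrow> q dvd F m * F (r - 1)"
    unfolding e using q(2) by (metis dvd_add_right_iff dvd_mult)
  also have "\<dots> \<longleftrightarrow> q dvd F m" using nd q(1) by (simp add: prime_dvd_mult_iff)
  finally show ?thesis .
qed

lemma rank: assumes q: "prime q" "q dvd F r" "r \<ge> 1" and mn: "\<forall>k. 1 \<le> k \<and> k < r \<longrightarrow> \<not> q dvd F k"
  shows "q dvd F n \<longleftrightarrow> r dvd n"
proof (induction n rule: less_induct)
  case (less n)
  show ?case
  proof (cases "n < r")
    case True
    then show ?thesis using mn by (cases "n = 0") (auto dest: dvd_imp_le)
  next
    case False
    then have "n = (n - r) + r" by simp
    then have "q dvd F n \<longleftrightarrow> q dvd F (n - r)" using shift[OF q] by metis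
    also have "\<dots> \<longleftrightarrow> r dvd (n - r)" using less[of "n - r"] q(3) False by simp
    also have "\<dots> \<longleftrightarrow> r dvd n" using False by (simp add: dvd_minus_self)
    finally show ?thesis .
  qed
qed

lemma deriv_id: "(XX*XX + 4) * pderiv (F n) = of_nat n * (2 * F (Suc n) - XX * F n) - XX * F n"
proof (induction n rule: less_induct)
  case (less n)
  show ?case
  proof (cases n)
    case 0 then show ?thesis by (simp add: XX_def)
  next
    case (Suc k)
    show ?thesis
    proof (cases k)
      case 0 then show ?thesis using Suc by (simp add: F_rec algebra_simps)
    next
      case (Suc j)
      have pX: "pderiv XX = 1" by (simp add: XX_def pderiv_pCons)
      have h1: "(XX*XX + 4) * pderiv (F j) = of_nat j * (2 * F (Suc j) - XX * F j) - XX * F j"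
        using less[of j] Suc \<open>n = Suc k\<close> by simp
      have h2: "(XX*XX + 4) * pderiv (F (Suc j)) = of_nat (Suc j) * (2 * F (Suc (Suc j)) - XX * F (Suc j)) - XX * F (Suc j)"
        using less[of k] Suc \<open>n = Suc k\<close> by simp
      have "(XX*XX + 4) * pderiv (F n) = (XX*XX + 4) * F (Suc j) + XX * ((XX*XX + 4) * pderiv (F (Suc j))) + (XX*XX + 4) * pderiv (F j)"
        using \<open>n = Suc k\<close> Suc by (simp add: F_rec pderiv_add pderiv_mult pX algebra_simps)
      also have "\<dots> = of_nat n * (2 * F (Suc n) - XX * F n) - XX * F n"
        unfolding h1 h2 using \<open>n = Suc k\<close> Suc by (simp add: F_rec algebra_simps)
      finally show ?thesis .
    qed
  qed
qed


instance poly :: ("{factorial_ring_gcd, semiring_gcd_mult_normalize}") factorial_semiring_multiplicative ..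

lemma lc_F: "n \<ge> 1 \<Longrightarrow> lead_coeff (F n) = 1"
proof -
  assume "n \<ge> 1"
  then have "Suc (n - 1) = n" by simp
  then show ?thesis using F_monic[of "n - 1"] by metis
qed

lemma prime_dvd_F_deg: assumes "prime q" "q dvd F n" "n \<ge> 1" shows "degree q \<ge> 1"
proof (rule ccontr)
  assume "\<not> degree q \<ge> 1"
  then have "degree q = 0" by simp
  then have qc: "q = [:coeff q 0:]" by (metis degree_0_id)
  have "coeff q 0 dvd coeff (F n) (degree (F n))"
    using assms(2) qc const_poly_dvd_iff by metis
  then have "coeff q 0 dvd 1" using lc_F[OF assms(3)] by simp
  then have "is_unit q" using qc is_unit_poly_iff by metis
  then show False using assms(1) not_prime_unit by blast
qed

lemma prime_dvd_F_not_nat: assumes "prime q" "q dvd F n" "n \<ge> 1" "k > 0"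
  shows "\<not> q dvd (of_nat k :: int poly)"
proof
  assume "q dvd of_nat k"
  moreover have "(of_nat k :: int poly) \<noteq> 0" using assms(4) by simp
  ultimately have "degree q \<le> degree (of_nat k :: int poly)" by (rule dvd_imp_degree_le)
  then have "degree q = 0" by (simp add: of_nat_poly)
  then show False using prime_dvd_F_deg[OF assms(1-3)] by simp
qed

lemma F_sqfree_aux: assumes q: "prime q" and d: "q * q dvd F n" and n: "n \<ge> 1" shows False
proof -
  obtain r where r0: "F n = q * q * r" using d by (elim dvdE)
  then have r: "F n = q * (q * r)" by (simp add: mult.assoc)
  have "pderiv (F n) = q * (pderiv (q * r) + pderiv q * r)"
    unfolding r by (simp add: pderiv_mult algebra_simps)
  then have dp: "q dvd pderiv (F n)" by simp
  have qF: "q dvd F n" using d by (metis dvd_mult_left)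
  have "q dvd (XX*XX + 4) * pderiv (F n)" using dp by simp
  then have h: "q dvd of_nat n * (2 * F (Suc n) - XX * F n) - XX * F n" by (simp only: deriv_id)
  have "of_nat (2*n) * F (Suc n) = (of_nat n * (2 * F (Suc n) - XX * F n) - XX * F n) + (of_nat n * XX + XX) * F n"
    by (simp add: algebra_simps)
  also have "q dvd \<dots>" using h qF by (intro dvd_add) auto
  finally have "q dvd of_nat (2*n) * F (Suc n)" .
  then have "q dvd of_nat (2*n) \<or> q dvd F (Suc n)" using q by (simp add: prime_dvd_mult_iff)
  then show False
    using prime_dvd_F_not_nat[OF q qF n, of "2*n"] n coprime_consec[OF q qF] by auto
qed

lemma F_sqfree: "n \<ge> 1 \<Longrightarrow> squarefree (F n)"
  using F_sqfree_aux F_nz by (auto simp: squarefree_factorial_semiring power2_eq_square)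

lemma monic_normalize: "lead_coeff (q::int poly) = 1 \<Longrightarrow> normalize q = q"
  by (simp add: normalize_poly_eq_map_poly map_poly_idI)

lemma F_factor: assumes "n \<ge> 1" shows "F n = (\<Prod>p\<in>prime_factors (F n). p)"
proof -
  have nz: "F n \<noteq> 0" using F_nz assms by simp
  have "(\<Prod>p\<in>prime_factors (F n). p ^ multiplicity p (F n)) = normalize (F n)"
    by (rule prod_prime_factors[OF nz])
  also have "\<dots> = F n" using lc_F[OF assms] by (simp add: monic_normalize)
  finally have e: "(\<Prod>p\<in>prime_factors (F n). p ^ multiplicity p (F n)) = F n" .
  have "(\<Prod>p\<in>prime_factors (F n). p ^ multiplicity p (F n)) = (\<Prod>p\<in>prime_factors (F n). p)"
  proof (rule prod.cong)
    fix p assume p: "p \<in> prime_factors (F n)"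
    then have pp: "prime p" "p dvd F n" by auto
    have "multiplicity p (F n) \<ge> 1" using pp nz by (simp add: prime_multiplicity_gt_zero_iff Suc_le_eq)
    moreover have "\<not> 2 \<le> multiplicity p (F n)"
      using power_dvd_iff_le_multiplicity[where p=p and n=2 and x="F n"] pp nz F_sqfree_aux[OF pp(1) _ assms]
      by (auto simp: power2_eq_square)
    ultimately show "p ^ multiplicity p (F n) = p" by (metis One_nat_def Suc_1 le_antisym not_less_eq_eq power_one_right)
  qed simp
  then show ?thesis using e by simp
qed

lemma prime_iff_monic: assumes "n \<ge> 1"
  shows "(prime q \<and> q dvd F n) \<longleftrightarrow> (lead_coeff q = 1 \<and> irreducible q \<and> q dvd F n)"
proof
  assume h: "prime q \<and> q dvd F n"
  then obtain r where r: "F n = q * r" by (auto elim: dvdE)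
  then have "lead_coeff q * lead_coeff r = 1" using lc_F[OF assms] by (simp add: lead_coeff_mult)
  then have l: "lead_coeff q = 1 \<or> lead_coeff q = -1" using zmult_eq_1_iff by blast
  have nq: "normalize q = q" using h by (simp add: prime_def)
  have "lead_coeff q \<noteq> -1"
  proof
    assume m: "lead_coeff q = -1"
    have "coeff (normalize q) (degree q) = coeff q (degree q) div unit_factor (lead_coeff q)"
      by (rule coeff_normalize)
    then show False using m nq by simp
  qed
  then show "lead_coeff q = 1 \<and> irreducible q \<and> q dvd F n"
    using l h by (auto simp: prime_elem_iff_irreducible[symmetric] prime_def)
next
  assume "lead_coeff q = 1 \<and> irreducible q \<and> q dvd F n"
  then show "prime q \<and> q dvd F n"
    by (auto simp: prime_elem_iff_irreducible[symmetric] prime_def monic_normalize)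
qed


definition S :: "nat \<Rightarrow> int poly set" where
  "S d = {p. lead_coeff p = 1 \<and> irreducible p \<and> p dvd F d \<and> (\<forall>k. 1 \<le> k \<and> k < d \<longrightarrow> \<not> p dvd F k)}"

lemma fib_S: "fibotomic d = (\<Prod>p\<in>S d. p)" by (simp add: fibotomic_def S_def)

lemma S_prime: "d \<ge> 1 \<Longrightarrow> p \<in> S d \<Longrightarrow> prime p"
  using prime_iff_monic[of d p] by (auto simp: S_def)

lemma S_sub: "d \<ge> 1 \<Longrightarrow> S d \<subseteq> prime_factors (F d)"
  using F_nz S_prime by (auto simp: in_prime_factors_iff S_def)

lemma S_fin: "d \<ge> 1 \<Longrightarrow> finite (S d)"
  using S_sub finite_subset finite_set_mset by metis

lemma S_rank: "d \<ge> 1 \<Longrightarrow> p \<in> S d \<Longrightarrow> p dvd F n \<longleftrightarrow> d dvd n"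
  using rank[of p d n] S_prime[of d p] by (auto simp: S_def)

lemma S_disj: "d \<ge> 1 \<Longrightarrow> e \<ge> 1 \<Longrightarrow> p \<in> S d \<Longrightarrow> p \<in> S e \<Longrightarrow> d = e"
  by (auto simp: S_def) (metis linorder_neqE_nat)

lemma decomp: assumes n: "n \<ge> 1"
  shows "prime_factors (F n) = (\<Union>d\<in>{d. d dvd n}. S d)"
proof
  show "prime_factors (F n) \<subseteq> (\<Union>d\<in>{d. d dvd n}. S d)"
  proof
    fix p assume p: "p \<in> prime_factors (F n)"
    then have pp: "prime p" "p dvd F n" by auto
    define r where "r = (LEAST k. 1 \<le> k \<and> p dvd F k)"
    have r1: "1 \<le> r \<and> p dvd F r" unfolding r_def by (rule LeastI[of _ n]) (use pp n in auto)
    have r2: "\<forall>k. 1 \<le> k \<and> k < r \<longrightarrow> \<not> p dvd F k" unfolding r_def using not_less_Least by blast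
    have "p \<in> S r" using r1 r2 prime_iff_monic[of r p] pp by (auto simp: S_def)
    moreover have "r dvd n" using S_rank[of r p n] r1 pp \<open>p \<in> S r\<close> by auto
    ultimately show "p \<in> (\<Union>d\<in>{d. d dvd n}. S d)" by auto
  qed
next
  show "(\<Union>d\<in>{d. d dvd n}. S d) \<subseteq> prime_factors (F n)"
  proof
    fix p assume "p \<in> (\<Union>d\<in>{d. d dvd n}. S d)"
    then obtain d where d: "d dvd n" "p \<in> S d" by auto
    have d1: "d \<ge> 1" using d(1) n by (metis dvd_0_left_iff less_one not_less)
    have "p dvd F n" using S_rank[OF d1 d(2)] d by simp
    then show "p \<in> prime_factors (F n)" using S_prime[OF d1 d(2)] F_nz n by (auto simp: in_prime_factors_iff)
  qed
qed

lemma F_prod: assumes n: "n \<ge> 1" shows "F n = (\<Prod>d\<in>{d. d dvd n}. fibotomic d)"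
proof -
  have dv: "\<And>d. d \<in> {d. d dvd n} \<Longrightarrow> d \<ge> 1" using n by (metis dvd_0_left_iff less_one mem_Collect_eq not_less)
  have "F n = (\<Prod>p\<in>(\<Union>d\<in>{d. d dvd n}. S d). p)" using F_factor[OF n] decomp[OF n] by simp
  also have "\<dots> = (\<Prod>d\<in>{d. d dvd n}. (\<Prod>p\<in>S d. p))"
  proof (rule prod.UNION_disjoint)
    show "finite {d. d dvd n}" using n by simp
    show "\<forall>i\<in>{d. d dvd n}. finite (S i)" using dv S_fin by blast
    show "\<forall>i\<in>{d. d dvd n}. \<forall>j\<in>{d. d dvd n}. i \<noteq> j \<longrightarrow> S i \<inter> S j = {}"
      using dv S_disj by blast
  qed
  finally show ?thesis by (simp add: fib_S)
qed


abbreviation R :: "int poly \<Rightarrow> real poly" where "R \<equiv> map_poly of_int"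

lemma R_add: "R (p + q) = R p + R q"
  by (rule poly_eqI) (simp add: coeff_map_poly)

lemma R_mult: "R (p * q) = R p * R q"
  by (rule poly_eqI) (simp add: coeff_map_poly coeff_mult)

lemma R_XX: "R XX = [:0,1:]" by (simp add: XX_def map_poly_pCons)

lemma F_pos: "s > 0 \<Longrightarrow> poly (R (F (Suc n))) s > 0 \<and> poly (R (F n)) s \<ge> 0"
proof (induction n)
  case 0 then show ?case by simp
next
  case (Suc n)
  have "poly (R (F (Suc (Suc n)))) s = s * poly (R (F (Suc n))) s + poly (R (F n)) s"
    by (simp add: F_rec R_add R_mult R_XX)
  with Suc show ?case by (simp add: add_pos_nonneg)
qed

lemma monic_dvd_F_pos0:
  assumes m: "lead_coeff q = 1" and d: "q dvd F d" "d \<ge> 1" and nz: "poly q 0 \<noteq> 0"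
  shows "poly q 0 > 0"
proof (rule ccontr)
  assume "\<not> poly q 0 > 0"
  then have neg: "poly q 0 < 0" using nz by simp
  have lc: "lead_coeff (R q) = 1" using m by (subst lead_coeff_map_poly_nz) auto
  obtain b where b: "\<forall>x\<ge>b. poly (R q) x \<ge> lead_coeff (R q)" using poly_pinfty_gt_lc[of "R q"] lc by auto
  define c where "c = max b 1"
  have c0: "c > 0" "c \<ge> b" unfolding c_def by auto
  have "poly (R q) c \<ge> 1" using b lc c0 by auto
  then have c: "c > 0" "poly (R q) c > 0" using c0 by auto
  have "poly (R q) 0 < 0" using neg by (simp add: poly_0_coeff_0 coeff_map_poly)
  then obtain s where s: "0 < s" "s < c" "poly (R q) s = 0" using poly_IVT_pos[OF c(1)] c(2) by blast
  obtain r where r: "F d = q * r" using d by (elim dvdE)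
  have "poly (R (F d)) s = 0" using s by (simp add: r R_mult)
  moreover have "poly (R (F (Suc (d - 1)))) s > 0" using F_pos s by blast
  ultimately show False using d(2) by simp
qed

lemma XX_prime_elem: "prime_elem XX"
proof (rule prime_elemI)
  show "XX \<noteq> 0" by (simp add: XX_def)
  show "\<not> XX dvd 1" by (auto simp: XX_def is_unit_poly_iff)
  fix a b assume "XX dvd a * b"
  then have "poly (a*b) 0 = 0" using dvd_iff_poly_eq_0[of 0 "a*b"] by (simp add: XX_def)
  then have "poly a 0 = 0 \<or> poly b 0 = 0" by simp
  then show "XX dvd a \<or> XX dvd b" using dvd_iff_poly_eq_0[of 0] by (auto simp: XX_def)
qed

lemma XX_irr: "irreducible XX" using XX_prime_elem prime_elem_imp_irreducible by blast

lemma XX_not_unit: "\<not> is_unit XX" by (auto simp: XX_def is_unit_poly_iff)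

lemma monic_factor_unit: assumes "p = a * r" "lead_coeff p = 1" "lead_coeff a = 1" "is_unit r"
  shows "p = (a :: int poly)"
proof -
  obtain c where c: "r = [:c:]" "is_unit c" using assms(4) is_unit_poly_iff by blast
  have "lead_coeff p = lead_coeff a * c" using assms(1) c by (simp add: lead_coeff_mult)
  then have "c = 1" using assms by simp
  then show ?thesis using assms c by simp
qed

lemma S2: "S 2 = {XX}"
proof
  show "S 2 \<subseteq> {XX}"
  proof
    fix p assume p: "p \<in> S 2"
    then have "p dvd XX" by (simp add: S_def F_rec numeral_2_eq_2)
    then obtain r where r: "XX = p * r" by (elim dvdE)
    have "\<not> is_unit p" using p by (auto simp: S_def irreducible_def)
    then have "is_unit r" using XX_irr r by (auto simp: irreducible_def)
    then have "XX = p" using monic_factor_unit[OF r] p by (auto simp: S_def XX_def)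
    then show "p \<in> {XX}" by simp
  qed
next
  have "lead_coeff XX = 1" by (simp add: XX_def)
  moreover have "XX dvd F 2" by (simp add: F_rec numeral_2_eq_2)
  moreover have "\<forall>k. 1 \<le> k \<and> k < 2 \<longrightarrow> \<not> XX dvd F k" using XX_not_unit by (auto simp: numeral_2_eq_2 less_Suc_eq)
  ultimately show "{XX} \<subseteq> S 2" using XX_irr by (simp add: S_def)
qed

lemma g2: "poly (fibotomic 2) 0 = 0" by (simp add: fib_S S2 XX_def)

lemma S_pos: assumes "d \<ge> 1" "d \<noteq> 2" "p \<in> S d" shows "poly p 0 > 0"
proof (rule monic_dvd_F_pos0)
  show "lead_coeff p = 1" "p dvd F d" using assms by (auto simp: S_def)
  show "d \<ge> 1" by fact
  show "poly p 0 \<noteq> 0"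
  proof
    assume "poly p 0 = 0"
    then have "XX dvd p" using dvd_iff_poly_eq_0[of 0 p] by (simp add: XX_def)
    then obtain r where r: "p = XX * r" by (elim dvdE)
    have "is_unit r" using r XX_not_unit assms(3) by (auto simp: S_def irreducible_def)
    then have "p = XX" using monic_factor_unit[OF r] assms(3) by (auto simp: S_def XX_def)
    then have "d = 2" using S_disj[of d 2 XX] assms S2 by auto
    then show False using assms by simp
  qed
qed

lemma g_pos: "d \<ge> 1 \<Longrightarrow> d \<noteq> 2 \<Longrightarrow> poly (fibotomic d) 0 > 0"
  by (simp add: fib_S poly_prod S_pos prod_pos)

lemma F_coeffs: "coeff (F n) 0 = (if odd n then 1 else 0) \<and> coeff (F n) 1 = (if even n then int (n div 2) else 0)"
proof (induction n rule: less_induct)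
  case (less n)
  show ?case
  proof (cases n)
    case 0 then show ?thesis by simp
  next
    case (Suc k)
    show ?thesis
    proof (cases k)
      case 0 then show ?thesis using Suc by simp
    next
      case (Suc j)
      have "F n = pCons 0 (F (Suc j)) + F j" using \<open>n = Suc k\<close> Suc by (simp add: F_rec XX_def)
      then have "coeff (F n) 0 = coeff (F j) 0" "coeff (F n) 1 = coeff (F (Suc j)) 0 + coeff (F j) 1"
        by (simp_all add: coeff_pCons)
      then show ?thesis using less[of j] less[of "Suc j"] \<open>n = Suc k\<close> Suc by auto
    qed
  qed
qed


definition lam :: "nat \<Rightarrow> nat" where "lam e = (\<Prod>p\<in>{p. prime p \<and> (\<exists>k>0. e = p^k)}. p)"

lemma lam_fin: "e > 0 \<Longrightarrow> finite {p::nat. prime p \<and> (\<exists>k>0. e = p^k)}"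
proof (rule finite_subset[of _ "{..e}"])
  assume "e > 0"
  show "{p::nat. prime p \<and> (\<exists>k>0. e = p^k)} \<subseteq> {..e}"
  proof
    fix p assume "p \<in> {p::nat. prime p \<and> (\<exists>k>0. e = p^k)}"
    then obtain k where "prime p" "k > 0" "e = p^k" by auto
    then have "p \<le> e" using self_le_power[of p k] prime_ge_1_nat by simp
    then show "p \<in> {..e}" by simp
  qed
qed simp

lemma lam_pos: "lam e > 0"
  unfolding lam_def by (rule prod_pos) (auto simp: prime_gt_0_nat)

lemma lam_pp: assumes "prime p" "a > 0" shows "lam (p^a) = p"
proof -
  have "{q. prime q \<and> (\<exists>k>0. p^a = q^k)} = {p}"
  proof safe
    fix q k assume q: "prime q" "k > 0" "p^a = q^k"
    then have "q dvd p^a" by (simp add: dvd_power)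
    then have "q dvd p" using q(1) prime_dvd_power by blast
    then show "q = p" using q(1) assms(1) primes_dvd_imp_eq by blast
  qed (use assms in auto)
  then show ?thesis by (simp add: lam_def)
qed

lemma lam_other: assumes "\<not> (\<exists>p a. prime p \<and> a > 0 \<and> e = p^a)" shows "lam e = 1"
proof -
  have "{q. prime q \<and> (\<exists>k>0. e = q^k)} = {}" using assms by auto
  then show ?thesis unfolding lam_def by (metis prod.empty)
qed

lemma H: assumes m: "m \<ge> (1::nat)" shows "(\<Prod>e\<in>{e. e dvd m \<and> e \<noteq> 1}. lam e) = m"
proof -
  define E where "E = {e. e dvd m \<and> e \<noteq> 1}"
  define P where "P = (\<lambda>e. {p::nat. prime p \<and> (\<exists>k>0. e = p^k)})"
  define Pi where "Pi = Sigma (prime_factors m) (\<lambda>p. {1..multiplicity p m})"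
  define phi where "phi = (\<lambda>x::nat\<times>nat. (fst x ^ snd x, fst x))"
  have "E \<subseteq> {..m}" unfolding E_def using m by (auto dest: dvd_imp_le)
  then have finE: "finite E" using finite_subset by blast
  have E0: "e > 0" if "e \<in> E" for e
  proof -
    have "e dvd m" using that unfolding E_def by simp
    then show ?thesis using m by (cases e) auto
  qed
  have finP: "\<forall>e\<in>E. finite (P e)" unfolding P_def using lam_fin E0 by blast
  have "(\<Prod>e\<in>E. lam e) = (\<Prod>e\<in>E. \<Prod>p\<in>P e. p)" unfolding lam_def P_def by (rule refl)
  also have "\<dots> = (\<Prod>(e,p)\<in>Sigma E P. p)" by (rule prod.Sigma[of E P "\<lambda>e p. p"]) (use finE finP in auto)
  also have "Sigma E P = phi ` Pi"
  proof (rule set_eqI, rule iffI)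
    fix x assume x: "x \<in> Sigma E P"
    obtain e p where xe: "x = (e,p)" by fastforce
    have ep: "e \<in> E" "p \<in> P e" using x unfolding xe by blast+
    then obtain k where k: "prime p" "k > 0" "e = p^k" unfolding P_def by blast
    have pkm: "p^k dvd m" using ep(1) k(3) unfolding E_def by simp
    have "p \<noteq> 1" using k(1) by auto
    then have k1: "k \<le> multiplicity p m" using pkm m power_dvd_iff_le_multiplicity[where p=p and n=k and x=m] by simp
    have "p dvd p^k" using k(2) by simp
    then have "p dvd m" using pkm by (rule dvd_trans)
    then have "p \<in> prime_factors m" using k(1) m by (simp add: in_prime_factors_iff)
    then have "(p,k) \<in> Pi" using k(2) k1 unfolding Pi_def by simp
    moreover have "x = phi (p,k)" using k(3) xe unfolding phi_def by simp
    ultimately show "x \<in> phi ` Pi" by (rule rev_image_eqI)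
  next
    fix x assume x: "x \<in> phi ` Pi"
    then obtain y where y: "y \<in> Pi" "x = phi y" by (rule imageE)
    obtain p k where yk: "y = (p,k)" by fastforce
    have e: "x = (p^k, p)" using y(2) unfolding yk phi_def by simp
    have pp0: "p \<in> prime_factors m" "1 \<le> k" "k \<le> multiplicity p m" using y(1) unfolding Pi_def yk by simp_all
    have pp: "prime p" "1 \<le> k" "k \<le> multiplicity p m" using pp0 by (auto simp: in_prime_factors_iff)
    then have "p \<noteq> 1" by auto
    then have "p^k dvd m" using pp m power_dvd_iff_le_multiplicity[where p=p and n=k and x=m] by simp
    moreover have "p^k \<noteq> 1" using one_less_power[of p k] pp(2) prime_gt_1_nat[OF pp(1)] by simp
    ultimately have "p^k \<in> E" unfolding E_def by simp
    moreover have "p \<in> P (p^k)" unfolding P_def using pp by (auto intro!: exI[of _ k])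
    ultimately show "x \<in> Sigma E P" unfolding e by simp
  qed
  also have "(\<Prod>(e,p)\<in>phi ` Pi. p) = (\<Prod>x\<in>Pi. snd (phi x))"
  proof -
    have "inj_on phi Pi"
    proof (rule inj_onI)
      fix x y assume xy: "x \<in> Pi" "y \<in> Pi" "phi x = phi y"
      have "fst x = fst y" "fst x ^ snd x = fst y ^ snd y" using xy(3) unfolding phi_def by auto
      moreover have "fst x \<in> prime_factors m" using xy(1) unfolding Pi_def by (auto simp: mem_Sigma_iff)
      then have "prime (fst x)" by (simp add: in_prime_factors_iff)
      then have "fst x > 1" by (rule prime_gt_1_nat)
      ultimately have "snd x = snd y" by (metis power_inject_exp)
      then show "x = y" using \<open>fst x = fst y\<close> by (simp add: prod_eq_iff)
    qed
    then have "(\<Prod>z\<in>phi ` Pi. snd z) = (\<Prod>x\<in>Pi. snd (phi x))" by (simp add: prod.reindex)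
    moreover have "(\<Prod>(e,p)\<in>phi ` Pi. p) = (\<Prod>z\<in>phi ` Pi. snd z)" by (simp add: case_prod_beta)
    ultimately show ?thesis by simp
  qed
  also have "\<dots> = (\<Prod>(p,k)\<in>Pi. p)" by (simp add: phi_def case_prod_beta)
  also have "\<dots> = (\<Prod>p\<in>prime_factors m. \<Prod>k\<in>{1..multiplicity p m}. p)"
    unfolding Pi_def by (rule prod.Sigma[of "prime_factors m" "\<lambda>p. {1..multiplicity p m}" "\<lambda>p k. p", symmetric]) auto
  also have "\<dots> = (\<Prod>p\<in>prime_factors m. p ^ multiplicity p m)" by simp
  also have "\<dots> = m" using m by (simp add: prod_prime_factors)
  finally show ?thesis unfolding E_def .
qed


abbreviation g where "g d \<equiv> poly (fibotomic d) 0"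

lemma g_prod: "n \<ge> 1 \<Longrightarrow> coeff (F n) 0 = (\<Prod>d\<in>{d. d dvd n}. g d)"
  using F_prod[of n] by (simp add: poly_prod poly_0_coeff_0[symmetric])

lemma g_odd: assumes "odd d" shows "g d = 1"
proof -
  have d1: "d \<ge> 1" using assms by (cases d) auto
  have "(\<Prod>d'\<in>{d'. d' dvd d}. g d') = 1" using g_prod[OF d1] F_coeffs[of d] assms by simp
  moreover have "g d dvd (\<Prod>d'\<in>{d'. d' dvd d}. g d')" by (rule dvd_prodI) (use d1 in auto)
  ultimately have "g d dvd 1" by simp
  moreover have "d \<noteq> 2" using assms by auto
  then have "g d > 0" using g_pos[OF d1] by blast
  ultimately show ?thesis by (simp add: zdvd1_eq)
qed

lemma g_even_prod: assumes "m \<ge> 1" shows "(\<Prod>e\<in>{e. e dvd m \<and> e \<noteq> 1}. g (2*e)) = int m"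
proof -
  define D where "D = {d. d dvd 2*m}"
  have finD: "finite D" unfolding D_def using assms by simp
  have 2: "2 \<in> D" unfolding D_def by simp
  have "F (2*m) = (\<Prod>d\<in>D. fibotomic d)" unfolding D_def using F_prod[of "2*m"] assms by simp
  also have "\<dots> = fibotomic 2 * (\<Prod>d\<in>D - {2}. fibotomic d)" using prod.remove[OF finD 2] by simp
  also have "fibotomic 2 = XX" by (simp add: fib_S S2)
  finally have "F (2*m) = pCons 0 (\<Prod>d\<in>D - {2}. fibotomic d)" by (simp add: XX_def)
  then have "coeff (F (2*m)) 1 = poly (\<Prod>d\<in>D - {2}. fibotomic d) 0" by (simp add: poly_0_coeff_0)
  then have "coeff (F (2*m)) 1 = (\<Prod>d\<in>D - {2}. g d)" by (simp add: poly_prod)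
  then have A: "(\<Prod>d\<in>D - {2}. g d) = int m" using F_coeffs[of "2*m"] by simp
  define E where "E = {e. e dvd m \<and> e \<noteq> 1}"
  have sub: "(\<lambda>e. 2*e) ` E \<subseteq> D - {2}" unfolding E_def D_def by auto
  have rest: "\<forall>d\<in>(D - {2}) - (\<lambda>e. 2*e) ` E. g d = 1"
  proof
    fix d assume d: "d \<in> (D - {2}) - (\<lambda>e. 2*e) ` E"
    have "odd d"
    proof
      assume "even d"
      then obtain e where e: "d = 2*e" by (elim evenE)
      then have "e dvd m" "e \<noteq> 1" using d unfolding D_def by auto
      then have "d \<in> (\<lambda>e. 2*e) ` E" unfolding E_def e by auto
      then show False using d by simp
    qed
    then show "g d = 1" by (rule g_odd)
  qed
  have "(\<Prod>d\<in>D - {2}. g d) = (\<Prod>d\<in>(\<lambda>e. 2*e) ` E. g d)"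
    by (rule prod.mono_neutral_right) (use finD sub rest in auto)
  also have "\<dots> = (\<Prod>e\<in>E. g (2*e))" by (subst prod.reindex) (auto simp: inj_on_def)
  finally show ?thesis using A unfolding E_def by simp
qed

lemma g_even: "m \<ge> 2 \<Longrightarrow> g (2*m) = int (lam m)"
proof (induction m rule: less_induct)
  case (less m)
  define E where "E = {e. e dvd m \<and> e \<noteq> 1}"
  have finE: "finite E" unfolding E_def using less.prems by (auto intro: finite_subset[of _ "{..m}"] dest: dvd_imp_le)
  have mE: "m \<in> E" unfolding E_def using less.prems by simp
  have IH: "\<forall>e\<in>E - {m}. g (2*e) = int (lam e)"
  proof
    fix e assume e: "e \<in> E - {m}"
    then have "e dvd m" "e \<noteq> 1" "e \<noteq> m" unfolding E_def by auto
    moreover have "e \<le> m" using \<open>e dvd m\<close> less.prems by (intro dvd_imp_le) auto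
    moreover have "e \<noteq> 0"
    proof
      assume "e = 0"
      then show False using \<open>e dvd m\<close> less.prems by simp
    qed
    ultimately show "g (2*e) = int (lam e)" using less.IH[of e] by auto
  qed
  define Q where "Q = (\<Prod>e\<in>E - {m}. int (lam e))"
  have Qpos: "Q > 0" unfolding Q_def by (rule prod_pos) (simp add: lam_pos)
  have "int m = (\<Prod>e\<in>E. g (2*e))" using g_even_prod[of m] less.prems unfolding E_def by simp
  also have "\<dots> = g (2*m) * (\<Prod>e\<in>E - {m}. g (2*e))" using prod.remove[OF finE mE] by simp
  also have "(\<Prod>e\<in>E - {m}. g (2*e)) = Q" unfolding Q_def using IH by (intro prod.cong) auto
  finally have 1: "int m = g (2*m) * Q" .
  have "int m = int (\<Prod>e\<in>E. lam e)" using H[of m] less.prems unfolding E_def by simp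
  also have "\<dots> = (\<Prod>e\<in>E. int (lam e))" by simp
  also have "\<dots> = int (lam m) * Q" unfolding Q_def using prod.remove[OF finE mE] by simp
  finally have 2: "int m = int (lam m) * Q" .
  from 1 2 Qpos show ?case by simp
qed

theorem mainTheorem5:
  fixes n :: nat
  assumes "n > 0"
  shows "(n = 2 \<longrightarrow> poly (fibotomic n) 0 = 0) \<and>
         (\<forall>p \<alpha>. prime p \<and> \<alpha> > 0 \<and> n = 2 * p ^ \<alpha> \<longrightarrow> poly (fibotomic n) 0 = int p) \<and>
         (n \<noteq> 2 \<and> \<not> (\<exists>p \<alpha>. prime p \<and> \<alpha> > 0 \<and> n = 2 * p ^ \<alpha>)
            \<longrightarrow> poly (fibotomic n) 0 = 1)"
proof (intro conjI allI impI)
  show "n = 2 \<Longrightarrow> g n = 0" using g2 by simp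
next
  fix p \<alpha> assume h: "prime p \<and> \<alpha> > 0 \<and> n = 2 * p ^ \<alpha>"
  have "p ^ \<alpha> \<ge> 2" using h prime_ge_2_nat[of p] self_le_power[of p \<alpha>] by (meson order_trans prime_ge_1_nat)
  then have "g (2 * p^\<alpha>) = int (lam (p^\<alpha>))" by (rule g_even)
  then show "g n = int p" using h lam_pp by simp
next
  assume h: "n \<noteq> 2 \<and> \<not> (\<exists>p \<alpha>. prime p \<and> \<alpha> > 0 \<and> n = 2 * p ^ \<alpha>)"
  show "g n = 1"
  proof (cases "odd n")
    case True then show ?thesis by (rule g_odd)
  next
    case False
    then have "even n" by simp
    then obtain m where m: "n = 2*m" by (elim evenE)
    then have "m \<ge> 2" using h assms by (cases m) auto
    then have "g n = int (lam m)" using g_even m by simp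
    moreover have "lam m = 1" by (rule lam_other) (use h m in auto)
    ultimately show ?thesis by simp
  qed
qed


end
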